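(* Under a non-stretching curve evolution $\gamma_t=r_0\gamma+r_1\gamma'+r_2\gamma''$ with $r_0=-r_1'-\tfrac13(r_2''+2p_1r_2)$, the invariants $k_1=p_1$, $k_2=p_0-p_1'$ evolve by \[ \begin{pmatrix}k_1\\ k_2\end{pmatrix}_t=\mathcal{P}\begin{pmatrix}r_1\\ r_2\end{pmatrix}, \] where $\mathcal{P}$ is the skew-adjoint matrix differential operator \[ \mathcal{P}=\begin{pmatrix}-2D^3+Dk_1+k_1D & -D^4+D^2k_1+2Dk_2+k_2D\\[2pt] D^4-k_1D^2+2k_2D+Dk_2 & \tfrac23\big(D^5+k_1Dk_1-k_1D^3-D^3k_1\big)+[k_2,D^2]\end{pmatrix}. \]
   Context: Let $\gamma(x,t)$ be a family of nondegenerate (starlike) curves in centroaffine $\mathbb R^3$, each parametrized by centroaffine arclength $x$, i.e. $\det(\gamma,\gamma',\gamma'')=1$, where primes denote $x$-derivatives. Then $\gamma'''=p_0\gamma+p_1\gamma'$ for the Wilczynski invariants $p_0,p_1$. Set $k_1=p_1$, $k_2=p_0-p_1'$. $D$ denotes $\partial/\partial x$, products such as $Dk_1$ mean composition of $D$ with multiplication by $k_1$, and $[\cdot,\cdot]$ is the commutator of operators. *)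

theory Defs
  imports "HOL-Analysis.Analysis"
begin

text \<open>Functions of two real variables (x,t). Partial derivative in x (the
centroaffine arclength parameter) and in t (the evolution parameter).\<close>

definition pDx :: "(real \<Rightarrow> real \<Rightarrow> 'a::real_normed_vector) \<Rightarrow> real \<Rightarrow> real \<Rightarrow> 'a" where
  "pDx f = (\<lambda>x t. vector_derivative (\<lambda>y. f y t) (at x))"

definition pDt :: "(real \<Rightarrow> real \<Rightarrow> 'a::real_normed_vector) \<Rightarrow> real \<Rightarrow> real \<Rightarrow> 'a" where
  "pDt f = (\<lambda>x t. vector_derivative (\<lambda>s. f x s) (at t))"

fun iter_partial :: "bool list \<Rightarrow> (real \<Rightarrow> real \<Rightarrow> 'a::real_normed_vector) \<Rightarrow> real \<Rightarrow> real \<Rightarrow> 'a" where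
  "iter_partial [] f = f"
| "iter_partial (b # bs) f = (if b then pDx else pDt) (iter_partial bs f)"

definition smooth2 :: "(real \<times> real) set \<Rightarrow> (real \<Rightarrow> real \<Rightarrow> 'a::real_normed_vector) \<Rightarrow> bool" where
  "smooth2 U f \<longleftrightarrow>
     (\<forall>bs. continuous_on U (\<lambda>z. iter_partial bs f (fst z) (snd z)) \<and>
           (\<forall>x t. (x, t) \<in> U \<longrightarrow>
                 (\<lambda>y. iter_partial bs f y t) differentiable (at x) \<and>
                 (\<lambda>s. iter_partial bs f x s) differentiable (at t)))"

end

theory Submission
  imports Defs
begin


definition eqU :: "(real \<times> real) set \<Rightarrow> (real \<Rightarrow> real \<Rightarrow> 'a) \<Rightarrow> (real \<Rightarrow> real \<Rightarrow> 'a) \<Rightarrow> bool" where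
  "eqU U f g \<longleftrightarrow> (\<forall>x t. (x, t) \<in> U \<longrightarrow> f x t = g x t)"

lemma vd_cong_open:
  assumes "open S" "x \<in> S" "\<And>y. y \<in> S \<Longrightarrow> f y = g y"
  shows "vector_derivative f (at x) = vector_derivative g (at x)"
proof -
  have "(f has_vector_derivative d) (at x) \<longleftrightarrow> (g has_vector_derivative d) (at x)" for d
    using has_vector_derivative_transform_within_open[OF _ assms(1,2), of f d g]
      has_vector_derivative_transform_within_open[OF _ assms(1,2), of g d f] assms(3) by auto
  thus ?thesis unfolding vector_derivative_def by simp
qed

lemma diff_cong_open:
  fixes f g :: "real \<Rightarrow> 'a::real_normed_vector"
  assumes "open S" "x \<in> S" "\<And>y. y \<in> S \<Longrightarrow> f y = g y"
  shows "f differentiable (at x) \<longleftrightarrow> g differentiable (at x)"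
proof
  assume "f differentiable (at x)"
  then have "(f has_vector_derivative vector_derivative f (at x)) (at x)" using vector_derivative_works by blast
  then have "(g has_vector_derivative vector_derivative f (at x)) (at x)"
    by (rule has_vector_derivative_transform_within_open[OF _ assms(1,2)]) (simp add: assms(3))
  then show "g differentiable (at x)" by (rule differentiableI_vector)
next
  assume "g differentiable (at x)"
  then have "(g has_vector_derivative vector_derivative g (at x)) (at x)" using vector_derivative_works by blast
  then have "(f has_vector_derivative vector_derivative g (at x)) (at x)"
    by (rule has_vector_derivative_transform_within_open[OF _ assms(1,2)]) (simp add: assms(3))
  then show "f differentiable (at x)" by (rule differentiableI_vector)
qed

lemma slices:
  assumes "open U" "(x, t) \<in> U"
  obtains A B where "open A" "open B" "x \<in> A" "t \<in> B" "A \<times> B \<subseteq> U"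
proof -
  obtain A B where h: "open A" "open B" "(x, t) \<in> A \<times> B" "A \<times> B \<subseteq> U"
    by (rule open_prod_elim[OF assms])
  show ?thesis by (rule that[OF h(1,2) _ _ h(4)]) (use h(3) in auto)
qed

lemma pDx_cong:
  assumes "open U" "(x, t) \<in> U" "eqU U f g"
  shows "pDx f x t = pDx g x t"
proof -
  obtain A B where AB: "open A" "open B" "x \<in> A" "t \<in> B" "A \<times> B \<subseteq> U" using slices[OF assms(1,2)] .
  show ?thesis unfolding pDx_def
    by (rule vd_cong_open[OF AB(1,3)]) (use AB assms(3) in \<open>auto simp: eqU_def\<close>)
qed

lemma pDt_cong:
  assumes "open U" "(x, t) \<in> U" "eqU U f g"
  shows "pDt f x t = pDt g x t"
proof -
  obtain A B where AB: "open A" "open B" "x \<in> A" "t \<in> B" "A \<times> B \<subseteq> U" using slices[OF assms(1,2)] .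
  show ?thesis unfolding pDt_def
    by (rule vd_cong_open[OF AB(2,4)]) (use AB assms(3) in \<open>auto simp: eqU_def\<close>)
qed

lemma diffx_cong:
  assumes "open U" "(x, t) \<in> U" "eqU U f g"
  shows "(\<lambda>y. f y t) differentiable (at x) \<longleftrightarrow> (\<lambda>y. g y t) differentiable (at x)"
proof -
  obtain A B where AB: "open A" "open B" "x \<in> A" "t \<in> B" "A \<times> B \<subseteq> U" using slices[OF assms(1,2)] .
  show ?thesis
    by (rule diff_cong_open[OF AB(1,3)]) (use AB assms(3) in \<open>auto simp: eqU_def\<close>)
qed

lemma difft_cong:
  assumes "open U" "(x, t) \<in> U" "eqU U f g"
  shows "(\<lambda>s. f x s) differentiable (at t) \<longleftrightarrow> (\<lambda>s. g x s) differentiable (at t)"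
proof -
  obtain A B where AB: "open A" "open B" "x \<in> A" "t \<in> B" "A \<times> B \<subseteq> U" using slices[OF assms(1,2)] .
  show ?thesis
    by (rule diff_cong_open[OF AB(2,4)]) (use AB assms(3) in \<open>auto simp: eqU_def\<close>)
qed

lemma eqU_pDx: "open U \<Longrightarrow> eqU U f g \<Longrightarrow> eqU U (pDx f) (pDx g)"
  unfolding eqU_def[of U "pDx f"] using pDx_cong by blast
lemma eqU_pDt: "open U \<Longrightarrow> eqU U f g \<Longrightarrow> eqU U (pDt f) (pDt g)"
  unfolding eqU_def[of U "pDt f"] using pDt_cong by blast

lemma eqU_ip: "open U \<Longrightarrow> eqU U f g \<Longrightarrow> eqU U (iter_partial bs f) (iter_partial bs g)"
  by (induction bs) (auto intro: eqU_pDx eqU_pDt)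

lemma eqU_sym: "eqU U f g \<Longrightarrow> eqU U g f" by (auto simp: eqU_def)
lemma eqU_trans: "eqU U f g \<Longrightarrow> eqU U g h \<Longrightarrow> eqU U f h" by (auto simp: eqU_def)

lemma smooth2_cong:
  assumes "open U" "eqU U f g" "smooth2 U f"
  shows "smooth2 U g"
  unfolding smooth2_def
proof (intro allI conjI impI)
  fix bs
  have e: "eqU U (iter_partial bs f) (iter_partial bs g)" by (rule eqU_ip[OF assms(1,2)])
  have sm: "continuous_on U (\<lambda>z. iter_partial bs f (fst z) (snd z))"
     "\<And>x t. (x,t) \<in> U \<Longrightarrow> (\<lambda>y. iter_partial bs f y t) differentiable at x"
     "\<And>x t. (x,t) \<in> U \<Longrightarrow> (\<lambda>s. iter_partial bs f x s) differentiable at t"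
    using assms(3) unfolding smooth2_def by blast+
  show "continuous_on U (\<lambda>z. iter_partial bs g (fst z) (snd z))"
  proof (rule continuous_on_eq[OF sm(1)])
    fix z assume "z \<in> U" then show "iter_partial bs f (fst z) (snd z) = iter_partial bs g (fst z) (snd z)"
      using e by (cases z) (simp add: eqU_def)
  qed
  fix x t assume xt: "(x, t) \<in> U"
  show "(\<lambda>y. iter_partial bs g y t) differentiable at x"
    using diffx_cong[OF assms(1) xt e] sm(2)[OF xt] by simp
  show "(\<lambda>s. iter_partial bs g x s) differentiable at t"
    using difft_cong[OF assms(1) xt e] sm(3)[OF xt] by simp
qed

lemma ip_append: "iter_partial bs (iter_partial cs f) = iter_partial (bs @ cs) f"
  by (induction bs) auto

lemma smooth2_ip: "smooth2 U f \<Longrightarrow> smooth2 U (iter_partial cs f)"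
  unfolding smooth2_def ip_append
  apply (intro allI)
  subgoal for bs by (drule spec[of _ "bs @ cs"]) simp
  done

lemma smooth2_pDx: "smooth2 U f \<Longrightarrow> smooth2 U (pDx f)"
  using smooth2_ip[of U f "[True]"] by simp
lemma smooth2_pDt: "smooth2 U f \<Longrightarrow> smooth2 U (pDt f)"
  using smooth2_ip[of U f "[False]"] by simp
lemma smooth2_pow: "smooth2 U f \<Longrightarrow> smooth2 U ((pDx ^^ n) f)"
  by (induction n) (auto intro: smooth2_pDx)

lemma ip_const: "iter_partial bs (\<lambda>x t. c) = (\<lambda>x t. if bs = [] then c else 0)"
  by (induction bs) (auto simp: pDx_def pDt_def vector_derivative_at)

lemma smooth2_const: "smooth2 U (\<lambda>x t. c)"
  unfolding smooth2_def ip_const by auto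



lemma pDx_mult:
  fixes f g :: "real \<Rightarrow> real \<Rightarrow> real"
  assumes "(\<lambda>y. f y t) differentiable at x" "(\<lambda>y. g y t) differentiable at x"
  shows "pDx (\<lambda>x t. f x t * g x t) x t = pDx f x t * g x t + f x t * pDx g x t"
  unfolding pDx_def
  apply (rule vector_derivative_at)
  using has_vector_derivative_mult[OF assms(1)[unfolded vector_derivative_works] assms(2)[unfolded vector_derivative_works]]
  by (simp add: algebra_simps)

lemma pDt_mult:
  fixes f g :: "real \<Rightarrow> real \<Rightarrow> real"
  assumes "(\<lambda>s. f x s) differentiable at t" "(\<lambda>s. g x s) differentiable at t"
  shows "pDt (\<lambda>x t. f x t * g x t) x t = pDt f x t * g x t + f x t * pDt g x t"
  unfolding pDt_def
  apply (rule vector_derivative_at)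
  using has_vector_derivative_mult[OF assms(1)[unfolded vector_derivative_works] assms(2)[unfolded vector_derivative_works]]
  by (simp add: algebra_simps)

lemma pDx_scaleR:
  fixes f :: "real \<Rightarrow> real \<Rightarrow> real" and g :: "real \<Rightarrow> real \<Rightarrow> 'a::real_normed_vector"
  assumes "(\<lambda>y. f y t) differentiable at x" "(\<lambda>y. g y t) differentiable at x"
  shows "pDx (\<lambda>x t. f x t *\<^sub>R g x t) x t = pDx f x t *\<^sub>R g x t + f x t *\<^sub>R pDx g x t"
  unfolding pDx_def
  apply (rule vector_derivative_at)
  using has_vector_derivative_scaleR[OF assms(1)[unfolded vector_derivative_works has_real_derivative_iff_has_vector_derivative[symmetric]] assms(2)[unfolded vector_derivative_works]]
  by (simp add: algebra_simps)

lemma pDt_scaleR: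
  fixes f :: "real \<Rightarrow> real \<Rightarrow> real" and g :: "real \<Rightarrow> real \<Rightarrow> 'a::real_normed_vector"
  assumes "(\<lambda>s. f x s) differentiable at t" "(\<lambda>s. g x s) differentiable at t"
  shows "pDt (\<lambda>x t. f x t *\<^sub>R g x t) x t = pDt f x t *\<^sub>R g x t + f x t *\<^sub>R pDt g x t"
  unfolding pDt_def
  apply (rule vector_derivative_at)
  using has_vector_derivative_scaleR[OF assms(1)[unfolded vector_derivative_works has_real_derivative_iff_has_vector_derivative[symmetric]] assms(2)[unfolded vector_derivative_works]]
  by (simp add: algebra_simps)

lemma pDx_add:
  fixes f g :: "real \<Rightarrow> real \<Rightarrow> 'a::real_normed_vector"
  assumes "(\<lambda>y. f y t) differentiable at x" "(\<lambda>y. g y t) differentiable at x"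
  shows "pDx (\<lambda>x t. f x t + g x t) x t = pDx f x t + pDx g x t"
  unfolding pDx_def
  apply (rule vector_derivative_at)
  using has_vector_derivative_add[OF assms(1)[unfolded vector_derivative_works] assms(2)[unfolded vector_derivative_works]]
  by simp

lemma pDt_add:
  fixes f g :: "real \<Rightarrow> real \<Rightarrow> 'a::real_normed_vector"
  assumes "(\<lambda>s. f x s) differentiable at t" "(\<lambda>s. g x s) differentiable at t"
  shows "pDt (\<lambda>x t. f x t + g x t) x t = pDt f x t + pDt g x t"
  unfolding pDt_def
  apply (rule vector_derivative_at)
  using has_vector_derivative_add[OF assms(1)[unfolded vector_derivative_works] assms(2)[unfolded vector_derivative_works]]
  by simp

lemma pDx_neg:
  fixes f :: "real \<Rightarrow> real \<Rightarrow> 'a::real_normed_vector"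
  assumes "(\<lambda>y. f y t) differentiable at x"
  shows "pDx (\<lambda>x t. - f x t) x t = - pDx f x t"
  unfolding pDx_def
  apply (rule vector_derivative_at)
  using has_vector_derivative_minus[OF assms(1)[unfolded vector_derivative_works]]
  by simp

lemma pDt_neg:
  fixes f :: "real \<Rightarrow> real \<Rightarrow> 'a::real_normed_vector"
  assumes "(\<lambda>s. f x s) differentiable at t"
  shows "pDt (\<lambda>x t. - f x t) x t = - pDt f x t"
  unfolding pDt_def
  apply (rule vector_derivative_at)
  using has_vector_derivative_minus[OF assms(1)[unfolded vector_derivative_works]]
  by simp

lemma pDx_nth:
  fixes h :: "real \<Rightarrow> real \<Rightarrow> real^'n"
  assumes "(\<lambda>y. h y t) differentiable at x"
  shows "pDx (\<lambda>x t. h x t $ i) x t = pDx h x t $ i"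
  unfolding pDx_def
  apply (rule vector_derivative_at)
  using bounded_linear.has_vector_derivative[OF bounded_linear_vec_nth assms(1)[unfolded vector_derivative_works]]
  by simp

lemma pDt_nth:
  fixes h :: "real \<Rightarrow> real \<Rightarrow> real^'n"
  assumes "(\<lambda>s. h x s) differentiable at t"
  shows "pDt (\<lambda>x t. h x t $ i) x t = pDt h x t $ i"
  unfolding pDt_def
  apply (rule vector_derivative_at)
  using bounded_linear.has_vector_derivative[OF bounded_linear_vec_nth assms(1)[unfolded vector_derivative_works]]
  by simp

lemma diff_nth:
  fixes h :: "real \<Rightarrow> real^'n"
  assumes "h differentiable at x"
  shows "(\<lambda>y. h y $ i) differentiable at x"
  using bounded_linear.has_vector_derivative[OF bounded_linear_vec_nth assms(1)[unfolded vector_derivative_works]]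
  by (rule differentiableI_vector)



inductive PP :: "(real \<times> real) set \<Rightarrow> (real \<Rightarrow> real \<Rightarrow> real) \<Rightarrow> bool" for U where
  PP_base: "smooth2 U f \<Longrightarrow> PP U f"
| PP_add: "PP U f \<Longrightarrow> PP U g \<Longrightarrow> PP U (\<lambda>x t. f x t + g x t)"
| PP_mul: "PP U f \<Longrightarrow> PP U g \<Longrightarrow> PP U (\<lambda>x t. f x t * g x t)"
| PP_neg: "PP U f \<Longrightarrow> PP U (\<lambda>x t. - f x t)"

lemma PP_diff: "PP U f \<Longrightarrow> PP U g \<Longrightarrow> PP U (\<lambda>x t. f x t - g x t)"
  using PP_add[OF _ PP_neg, of U f g] by simp

lemma PP_props:
  assumes "open U" "PP U f"
  shows "continuous_on U (\<lambda>z. f (fst z) (snd z)) \<and>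
    (\<forall>x t. (x,t) \<in> U \<longrightarrow> (\<lambda>y. f y t) differentiable at x \<and> (\<lambda>s. f x s) differentiable at t) \<and>
    (\<exists>g. PP U g \<and> eqU U (pDx f) g) \<and> (\<exists>g. PP U g \<and> eqU U (pDt f) g)"
  using assms(2)
proof induction
  case (PP_base f)
  have "continuous_on U (\<lambda>z. iter_partial [] f (fst z) (snd z))"
     "\<And>x t. (x,t) \<in> U \<Longrightarrow> (\<lambda>y. iter_partial [] f y t) differentiable at x"
     "\<And>x t. (x,t) \<in> U \<Longrightarrow> (\<lambda>s. iter_partial [] f x s) differentiable at t"
    using PP_base unfolding smooth2_def by blast+
  moreover have "PP U (pDx f)" "PP U (pDt f)"
    using PP.PP_base smooth2_pDx smooth2_pDt PP_base by blast+
  moreover have "eqU U h h" for h :: "real \<Rightarrow> real \<Rightarrow> real" by (simp add: eqU_def)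
  ultimately show ?case by auto
next
  case (PP_add f g)
  have df: "\<And>x t. (x,t) \<in> U \<Longrightarrow> (\<lambda>y. f y t) differentiable at x \<and> (\<lambda>s. f x s) differentiable at t"
    using PP_add.IH(1) by blast
  have dg: "\<And>x t. (x,t) \<in> U \<Longrightarrow> (\<lambda>y. g y t) differentiable at x \<and> (\<lambda>s. g x s) differentiable at t"
    using PP_add.IH(2) by blast
  obtain f1 f2 where hf: "PP U f1" "eqU U (pDx f) f1" "PP U f2" "eqU U (pDt f) f2" using PP_add.IH(1) by blast
  obtain g1 g2 where hg: "PP U g1" "eqU U (pDx g) g1" "PP U g2" "eqU U (pDt g) g2" using PP_add.IH(2) by blast
  have "eqU U (pDx (\<lambda>x t. f x t + g x t)) (\<lambda>x t. f1 x t + g1 x t)"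
    unfolding eqU_def
  proof (intro allI impI)
    fix x t assume xt: "(x, t) \<in> U"
    show "pDx (\<lambda>x t. f x t + g x t) x t = f1 x t + g1 x t"
      using pDx_add[where f=f and g=g, OF df[OF xt, THEN conjunct1] dg[OF xt, THEN conjunct1]] hf(2) hg(2) xt by (simp add: eqU_def)
  qed
  moreover have "eqU U (pDt (\<lambda>x t. f x t + g x t)) (\<lambda>x t. f2 x t + g2 x t)"
    unfolding eqU_def
  proof (intro allI impI)
    fix x t assume xt: "(x, t) \<in> U"
    show "pDt (\<lambda>x t. f x t + g x t) x t = f2 x t + g2 x t"
      using pDt_add[where f=f and g=g, OF df[OF xt, THEN conjunct2] dg[OF xt, THEN conjunct2]] hf(4) hg(4) xt by (simp add: eqU_def)
  qed
  moreover have "continuous_on U (\<lambda>z. f (fst z) (snd z) + g (fst z) (snd z))"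
    using PP_add.IH by (intro continuous_on_add) blast+
  ultimately show ?case
    apply (intro conjI)
    subgoal by simp
    subgoal using df dg by (auto intro!: differentiable_add)
    subgoal using PP.PP_add[OF hf(1) hg(1)] by blast
    subgoal using PP.PP_add[OF hf(3) hg(3)] by blast
    done
next
  case (PP_mul f g)
  have df: "\<And>x t. (x,t) \<in> U \<Longrightarrow> (\<lambda>y. f y t) differentiable at x \<and> (\<lambda>s. f x s) differentiable at t"
    using PP_mul.IH(1) by blast
  have dg: "\<And>x t. (x,t) \<in> U \<Longrightarrow> (\<lambda>y. g y t) differentiable at x \<and> (\<lambda>s. g x s) differentiable at t"
    using PP_mul.IH(2) by blast
  obtain f1 f2 where hf: "PP U f1" "eqU U (pDx f) f1" "PP U f2" "eqU U (pDt f) f2" using PP_mul.IH(1) by blast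
  obtain g1 g2 where hg: "PP U g1" "eqU U (pDx g) g1" "PP U g2" "eqU U (pDt g) g2" using PP_mul.IH(2) by blast
  have "eqU U (pDx (\<lambda>x t. f x t * g x t)) (\<lambda>x t. f1 x t * g x t + f x t * g1 x t)"
    unfolding eqU_def
  proof (intro allI impI)
    fix x t assume xt: "(x, t) \<in> U"
    show "pDx (\<lambda>x t. f x t * g x t) x t = f1 x t * g x t + f x t * g1 x t"
      using pDx_mult[where f=f and g=g, OF df[OF xt, THEN conjunct1] dg[OF xt, THEN conjunct1]] hf(2) hg(2) xt by (simp add: eqU_def)
  qed
  moreover have "eqU U (pDt (\<lambda>x t. f x t * g x t)) (\<lambda>x t. f2 x t * g x t + f x t * g2 x t)"
    unfolding eqU_def
  proof (intro allI impI)
    fix x t assume xt: "(x, t) \<in> U"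
    show "pDt (\<lambda>x t. f x t * g x t) x t = f2 x t * g x t + f x t * g2 x t"
      using pDt_mult[where f=f and g=g, OF df[OF xt, THEN conjunct2] dg[OF xt, THEN conjunct2]] hf(4) hg(4) xt by (simp add: eqU_def)
  qed
  moreover have "continuous_on U (\<lambda>z. f (fst z) (snd z) * g (fst z) (snd z))"
    using PP_mul.IH by (intro continuous_on_mult) blast+
  moreover have "PP U (\<lambda>x t. f1 x t * g x t + f x t * g1 x t)" "PP U (\<lambda>x t. f2 x t * g x t + f x t * g2 x t)"
    using PP_mul.hyps hf hg by (auto intro!: PP.PP_add PP.PP_mul)
  ultimately show ?case
    apply (intro conjI)
    subgoal by simp
    subgoal using df dg by (auto intro!: differentiable_mult)
    subgoal by blast
    subgoal by blast
    done
next
  case (PP_neg f)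
  have df: "\<And>x t. (x,t) \<in> U \<Longrightarrow> (\<lambda>y. f y t) differentiable at x \<and> (\<lambda>s. f x s) differentiable at t"
    using PP_neg.IH(1) by blast
  obtain f1 f2 where hf: "PP U f1" "eqU U (pDx f) f1" "PP U f2" "eqU U (pDt f) f2" using PP_neg.IH(1) by blast
  have "eqU U (pDx (\<lambda>x t. - f x t)) (\<lambda>x t. - f1 x t)"
    unfolding eqU_def
  proof (intro allI impI)
    fix x t assume xt: "(x, t) \<in> U"
    show "pDx (\<lambda>x t. - f x t) x t = - f1 x t"
      using pDx_neg[where f=f, OF df[OF xt, THEN conjunct1]] hf(2) xt by (simp add: eqU_def)
  qed
  moreover have "eqU U (pDt (\<lambda>x t. - f x t)) (\<lambda>x t. - f2 x t)"
    unfolding eqU_def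
  proof (intro allI impI)
    fix x t assume xt: "(x, t) \<in> U"
    show "pDt (\<lambda>x t. - f x t) x t = - f2 x t"
      using pDt_neg[where f=f, OF df[OF xt, THEN conjunct2]] hf(4) xt by (simp add: eqU_def)
  qed
  moreover have "continuous_on U (\<lambda>z. - f (fst z) (snd z))"
    using PP_neg.IH by (intro continuous_on_minus) blast+
  ultimately show ?case
    apply (intro conjI)
    subgoal by simp
    subgoal using df by (auto intro!: differentiable_minus)
    subgoal using PP.PP_neg[OF hf(1)] by blast
    subgoal using PP.PP_neg[OF hf(3)] by blast
    done
qed

lemma PP_smooth:
  assumes "open U" "PP U f"
  shows "smooth2 U f"
proof -
  have ex: "\<exists>g. PP U g \<and> eqU U (iter_partial bs f) g" for bs
  proof (induction bs)
    case Nil then show ?case using assms(2) by (auto simp: eqU_def)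
  next
    case (Cons b bs)
    then obtain g where g: "PP U g" "eqU U (iter_partial bs f) g" by blast
    obtain g1 g2 where h: "PP U g1" "eqU U (pDx g) g1" "PP U g2" "eqU U (pDt g) g2"
      using PP_props[OF assms(1) g(1)] by blast
    show ?case
    proof (cases b)
      case True then show ?thesis
        using eqU_trans[OF eqU_pDx[OF assms(1) g(2)] h(2)] h(1) by auto
    next
      case False then show ?thesis
        using eqU_trans[OF eqU_pDt[OF assms(1) g(2)] h(4)] h(3) by auto
    qed
  qed
  show ?thesis unfolding smooth2_def
  proof (intro allI conjI impI)
    fix bs
    obtain g where g: "PP U g" "eqU U (iter_partial bs f) g" using ex by blast
    note pg = PP_props[OF assms(1) g(1)]
    show "continuous_on U (\<lambda>z. iter_partial bs f (fst z) (snd z))"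
    proof (rule continuous_on_eq[of U "\<lambda>z. g (fst z) (snd z)"])
      show "continuous_on U (\<lambda>z. g (fst z) (snd z))" using pg by blast
      fix z assume "z \<in> U" then show "g (fst z) (snd z) = iter_partial bs f (fst z) (snd z)"
        using g(2) by (cases z) (simp add: eqU_def)
    qed
    fix x t assume xt: "(x, t) \<in> U"
    show "(\<lambda>y. iter_partial bs f y t) differentiable at x"
      using diffx_cong[OF assms(1) xt g(2)] pg xt by blast
    show "(\<lambda>s. iter_partial bs f x s) differentiable at t"
      using difft_cong[OF assms(1) xt g(2)] pg xt by blast
  qed
qed

lemma smooth2_nth:
  fixes h :: "real \<Rightarrow> real \<Rightarrow> real^'n"
  assumes "open U" "smooth2 U h"
  shows "smooth2 U (\<lambda>x t. h x t $ i)"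
proof -
  have e: "eqU U (iter_partial bs (\<lambda>x t. h x t $ i)) (\<lambda>x t. iter_partial bs h x t $ i)" for bs
  proof (induction bs)
    case Nil then show ?case by (simp add: eqU_def)
  next
    case (Cons b bs)
    have d: "(\<lambda>y. iter_partial bs h y t) differentiable at x" "(\<lambda>s. iter_partial bs h x s) differentiable at t"
      if "(x,t) \<in> U" for x t using assms(2) that unfolding smooth2_def by blast+
    show ?case
    proof (cases b)
      case True then show ?thesis
        using eqU_pDx[OF assms(1) Cons] pDx_nth[OF d(1)] by (auto simp: eqU_def)
    next
      case False then show ?thesis
        using eqU_pDt[OF assms(1) Cons] pDt_nth[OF d(2)] by (auto simp: eqU_def)
    qed
  qed
  show ?thesis unfolding smooth2_def
  proof (intro allI conjI impI)
    fix bs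
    have c: "continuous_on U (\<lambda>z. iter_partial bs h (fst z) (snd z))"
      "\<And>x t. (x,t) \<in> U \<Longrightarrow> (\<lambda>y. iter_partial bs h y t) differentiable at x"
      "\<And>x t. (x,t) \<in> U \<Longrightarrow> (\<lambda>s. iter_partial bs h x s) differentiable at t"
      using assms(2) unfolding smooth2_def by blast+
    show "continuous_on U (\<lambda>z. iter_partial bs (\<lambda>x t. h x t $ i) (fst z) (snd z))"
    proof (rule continuous_on_eq[of U "\<lambda>z. iter_partial bs h (fst z) (snd z) $ i"])
      show "continuous_on U (\<lambda>z. iter_partial bs h (fst z) (snd z) $ i)"
        by (rule continuous_on_component[OF c(1)])
      fix z assume "z \<in> U" then show "iter_partial bs h (fst z) (snd z) $ i = iter_partial bs (\<lambda>x t. h x t $ i) (fst z) (snd z)"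
        using e[of bs] by (cases z) (simp add: eqU_def)
    qed
    fix x t assume xt: "(x, t) \<in> U"
    show "(\<lambda>y. iter_partial bs (\<lambda>x t. h x t $ i) y t) differentiable at x"
      using diffx_cong[OF assms(1) xt e[of bs]] diff_nth[OF c(2)[OF xt]] by simp
    show "(\<lambda>s. iter_partial bs (\<lambda>x t. h x t $ i) x s) differentiable at t"
      using difft_cong[OF assms(1) xt e[of bs]] diff_nth[OF c(3)[OF xt]] by simp
  qed
qed

lemma PP_det:
  fixes u v w :: "real \<Rightarrow> real \<Rightarrow> real^3"
  assumes "open U" "smooth2 U u" "smooth2 U v" "smooth2 U w"
  shows "PP U (\<lambda>x t. det (vector [u x t, v x t, w x t] :: real^3^3))"
proof -
  note s = PP_base[OF smooth2_nth[OF assms(1,2)]] PP_base[OF smooth2_nth[OF assms(1,3)]] PP_base[OF smooth2_nth[OF assms(1,4)]]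
  show ?thesis unfolding det_3 vector_3
    by (intro PP_add PP_diff PP_mul s)
qed



lemma clairaut:
  fixes f :: "real \<Rightarrow> real \<Rightarrow> 'a::banach"
  assumes U: "open U" and sm: "smooth2 U f" and xt: "(x, t) \<in> U"
  shows "pDt (pDx f) x t = pDx (pDt f) x t"
proof -
  define ft where "ft = pDt f"
  define ftx where "ftx = pDx ft"
  have H: "\<And>bs. continuous_on U (\<lambda>z. iter_partial bs f (fst z) (snd z))"
     "\<And>bs y s. (y,s) \<in> U \<Longrightarrow> (\<lambda>y. iter_partial bs f y s) differentiable at y"
     "\<And>bs y s. (y,s) \<in> U \<Longrightarrow> (\<lambda>s. iter_partial bs f y s) differentiable at s"
    using sm unfolding smooth2_def by blast+
  have cft: "continuous_on U (\<lambda>z. ft (fst z) (snd z))"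
    using H(1)[of "[False]"] by (simp add: ft_def)
  have cftx: "continuous_on U (\<lambda>z. ftx (fst z) (snd z))"
    using H(1)[of "[True,False]"] by (simp add: ftx_def ft_def)
  have dfx: "\<And>y s. (y,s) \<in> U \<Longrightarrow> (\<lambda>y. f y s) differentiable at y"
    using H(2)[of _ _ "[]"] by simp
  have dft: "\<And>y s. (y,s) \<in> U \<Longrightarrow> (\<lambda>s. f y s) differentiable at s"
    using H(3)[of _ _ "[]"] by simp
  have dftx: "\<And>y s. (y,s) \<in> U \<Longrightarrow> (\<lambda>y. ft y s) differentiable at y"
    using H(2)[of _ _ "[False]"] by (simp add: ft_def)
  obtain A B where AB: "open A" "open B" "x \<in> A" "t \<in> B" "A \<times> B \<subseteq> U"
    using slices[OF U xt] .
  obtain e1 where e1: "e1 > 0" "cball x e1 \<subseteq> A" using open_contains_cball AB(1,3) by blast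
  obtain e2 where e2: "e2 > 0" "cball t e2 \<subseteq> B" using open_contains_cball AB(2,4) by blast
  define e where "e = min e1 e2"
  have e: "e > 0" "cball x e \<subseteq> A" "cball t e \<subseteq> B"
    using e1 e2 unfolding e_def by auto
  define a where "a = t - e"
  have inU: "(y, s) \<in> U" if "y \<in> cball x e" "s \<in> {a..t+e}" for y s
  proof -
    have "s \<in> cball t e" using that(2) unfolding a_def by (auto simp: dist_real_def)
    then show ?thesis using that(1) e AB(5) by blast
  qed
  have key1: "f y s = f y a + integral {a..s} (ft y)" if y: "y \<in> cball x e" and s: "s \<in> {a..t+e}" for y s
  proof -
    have "((ft y) has_integral (f y s - f y a)) {a..s}"
    proof (rule fundamental_theorem_of_calculus)
      show "a \<le> s" using s by simp
      fix \<sigma> assume "\<sigma> \<in> {a..s}"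
      then have "(y, \<sigma>) \<in> U" using inU[OF y] s by auto
      then have "((\<lambda>s. f y s) has_vector_derivative ft y \<sigma>) (at \<sigma>)"
        using dft vector_derivative_works unfolding ft_def pDt_def by blast
      then show "((\<lambda>s. f y s) has_vector_derivative ft y \<sigma>) (at \<sigma> within {a..s})"
        by (rule has_vector_derivative_at_within)
    qed
    then show ?thesis by (simp add: integral_unique)
  qed
  have key2: "((\<lambda>y. integral {a..s} (ft y)) has_vector_derivative integral {a..s} (ftx x)) (at x)"
    if s: "s \<in> {a..t+e}" for s
  proof -
    have "((\<lambda>y. integral (cbox a s) (ft y)) has_vector_derivative integral (cbox a s) (ftx x)) (at x within ball x e)"
    proof (rule leibniz_rule_vector_derivative)
      fix y \<sigma> assume y: "y \<in> ball x e" and \<sigma>: "\<sigma> \<in> cbox a s"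
      have "(y, \<sigma>) \<in> U" using inU[of y \<sigma>] y \<sigma> s by auto
      then have "((\<lambda>y. ft y \<sigma>) has_vector_derivative ftx y \<sigma>) (at y)"
        using dftx vector_derivative_works unfolding ftx_def pDx_def by blast
      then show "((\<lambda>y. ft y \<sigma>) has_vector_derivative ftx y \<sigma>) (at y within ball x e)"
        by (rule has_vector_derivative_at_within)
    next
      fix y assume y: "y \<in> ball x e"
      have "continuous_on (cbox a s) (\<lambda>\<sigma>. (\<lambda>z. ft (fst z) (snd z)) (y, \<sigma>))"
        by (rule continuous_on_compose2[OF cft]) (use inU y s in \<open>auto intro!: continuous_intros\<close>)
      then show "ft y integrable_on cbox a s"
        by (intro integrable_continuous) simp
    next
      have "continuous_on (ball x e \<times> cbox a s) (\<lambda>z. ftx (fst z) (snd z))"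
        by (rule continuous_on_subset[OF cftx]) (use inU s in auto)
      then show "continuous_on (ball x e \<times> cbox a s) (\<lambda>(y, \<sigma>). ftx y \<sigma>)"
        by (simp add: case_prod_beta)
    qed (use e in auto)
    then show ?thesis using at_within_open[of x "ball x e"] e(1) by simp
  qed
  have key3: "pDx f x s = pDx f x a + integral {a..s} (ftx x)" if s: "s \<in> {a..t+e}" for s
  proof -
    have xa: "(x, a) \<in> U" using inU[of x a] e unfolding a_def by auto
    have "((\<lambda>y. f y a + integral {a..s} (ft y)) has_vector_derivative pDx f x a + integral {a..s} (ftx x)) (at x)"
      using dfx[OF xa] vector_derivative_works unfolding pDx_def
      by (intro has_vector_derivative_add key2 s) blast
    then have "((\<lambda>y. f y s) has_vector_derivative pDx f x a + integral {a..s} (ftx x)) (at x)"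
    proof (rule has_vector_derivative_transform_within_open[of _ _ _ "ball x e"])
      fix y assume "y \<in> ball x e"
      then have "y \<in> cball x e" by simp
      then show "f y a + integral {a..s} (ft y) = f y s" using key1[of y s] s by simp
    qed (use e in auto)
    then show ?thesis unfolding pDx_def[of f] by (rule vector_derivative_at)
  qed
  have "continuous_on {a..t+e} (ftx x)"
    by (rule continuous_on_compose2[OF cftx, of _ "\<lambda>\<sigma>. (x, \<sigma>)", simplified])
      (use inU e in \<open>auto intro!: continuous_intros\<close>)
  then have "((\<lambda>s. integral {a..s} (ftx x)) has_vector_derivative ftx x t) (at t within {a..t+e})"
    by (rule integral_has_vector_derivative) (use e in \<open>auto simp: a_def\<close>)
  moreover have "at t within {a..t+e} = at t"
    by (rule at_within_interior) (use e in \<open>auto simp: a_def\<close>)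
  ultimately have "((\<lambda>s. pDx f x a + integral {a..s} (ftx x)) has_vector_derivative ftx x t) (at t)"
    using has_vector_derivative_add[OF has_vector_derivative_const] by fastforce
  then have "((\<lambda>s. pDx f x s) has_vector_derivative ftx x t) (at t)"
  proof (rule has_vector_derivative_transform_within_open[of _ _ _ "ball t e"])
    fix s assume "s \<in> ball t e"
    then have "s \<in> {a..t+e}" unfolding a_def by (auto simp: dist_real_def)
    then show "pDx f x a + integral {a..s} (ftx x) = pDx f x s" by (rule key3[symmetric])
  qed (use e in auto)
  then have "pDt (pDx f) x t = ftx x t" unfolding pDt_def by (rule vector_derivative_at)
  then show ?thesis unfolding ftx_def ft_def .
qed



datatype fexp = Bas nat nat | Cst real | Ad fexp fexp | Mu fexp fexp | Ng fexp

fun ev :: "(nat \<Rightarrow> real \<Rightarrow> real \<Rightarrow> real) \<Rightarrow> fexp \<Rightarrow> real \<Rightarrow> real \<Rightarrow> real" where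
  "ev \<rho> (Bas i n) = (pDx ^^ n) (\<rho> i)"
| "ev \<rho> (Cst c) = (\<lambda>x t. c)"
| "ev \<rho> (Ad a b) = (\<lambda>x t. ev \<rho> a x t + ev \<rho> b x t)"
| "ev \<rho> (Mu a b) = (\<lambda>x t. ev \<rho> a x t * ev \<rho> b x t)"
| "ev \<rho> (Ng a) = (\<lambda>x t. - ev \<rho> a x t)"

fun dx :: "fexp \<Rightarrow> fexp" where
  "dx (Bas i n) = Bas i (n + 1)"
| "dx (Cst c) = Cst 0"
| "dx (Ad a b) = Ad (dx a) (dx b)"
| "dx (Mu a b) = Ad (Mu (dx a) b) (Mu a (dx b))"
| "dx (Ng a) = Ng (dx a)"

lemma ev_PP:
  assumes "open U" "\<And>i. smooth2 U (\<rho> i)"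
  shows "PP U (ev \<rho> e)"
proof (induction e)
  case (Bas i n) then show ?case using smooth2_pow[OF assms(2)] PP_base by simp
next
  case (Cst c) then show ?case using PP_base[OF smooth2_const] by simp
qed (auto intro: PP_add PP_mul PP_neg)

lemma ev_diff:
  assumes "open U" "\<And>i. smooth2 U (\<rho> i)" "(x, t) \<in> U"
  shows "(\<lambda>y. ev \<rho> e y t) differentiable at x" "(\<lambda>s. ev \<rho> e x s) differentiable at t"
proof -
  have "PP U (ev \<rho> e)" by (rule ev_PP[OF assms(1)]) (rule assms(2))
  then show "(\<lambda>y. ev \<rho> e y t) differentiable at x" "(\<lambda>s. ev \<rho> e x s) differentiable at t"
    using PP_props[OF assms(1)] assms(3) by blast+
qed

lemma ev_dx:
  assumes "open U" "\<And>i. smooth2 U (\<rho> i)" "(x, t) \<in> U"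
  shows "pDx (ev \<rho> e) x t = ev \<rho> (dx e) x t"
proof (induction e)
  case (Bas i n) then show ?case by simp
next
  case (Cst c) then show ?case by (simp add: pDx_def vector_derivative_at)
next
  case (Ad a b) then show ?case
    using pDx_add[where f="ev \<rho> a" and g="ev \<rho> b", OF ev_diff(1)[OF assms] ev_diff(1)[OF assms]] by simp
next
  case (Mu a b) then show ?case
    using pDx_mult[where f="ev \<rho> a" and g="ev \<rho> b", OF ev_diff(1)[OF assms] ev_diff(1)[OF assms]] by simp
next
  case (Ng a) then show ?case
    using pDx_neg[where f="ev \<rho> a", OF ev_diff(1)[OF assms]] by simp
qed

lemma ev_dxn:
  assumes "open U" "\<And>i. smooth2 U (\<rho> i)"
  shows "eqU U ((pDx ^^ n) (ev \<rho> e)) (ev \<rho> ((dx ^^ n) e))"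
proof (induction n)
  case 0 then show ?case by (simp add: eqU_def)
next
  case (Suc n)
  have "eqU U (pDx ((pDx ^^ n) (ev \<rho> e))) (pDx (ev \<rho> ((dx ^^ n) e)))"
    by (rule eqU_pDx[OF assms(1) Suc])
  moreover have "eqU U (pDx (ev \<rho> ((dx ^^ n) e))) (ev \<rho> (dx ((dx ^^ n) e)))"
    using ev_dx[OF assms] by (simp add: eqU_def)
  ultimately show ?case by (simp add: eqU_trans)
qed

lemma det_coordA:
  fixes u v w z :: "real^3"
  assumes "z = a *\<^sub>R u + b *\<^sub>R v + c *\<^sub>R w"
  shows "det (vector [z, v, w] :: real^3^3) = a * det (vector [u, v, w] :: real^3^3)"
  using assms by (simp add: det_3 algebra_simps)

lemma det_coordB:
  fixes u v w z :: "real^3"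
  assumes "z = a *\<^sub>R u + b *\<^sub>R v + c *\<^sub>R w"
  shows "det (vector [u, z, w] :: real^3^3) = b * det (vector [u, v, w] :: real^3^3)"
  using assms by (simp add: det_3 algebra_simps)

lemma det_coordC:
  fixes u v w z :: "real^3"
  assumes "z = a *\<^sub>R u + b *\<^sub>R v + c *\<^sub>R w"
  shows "det (vector [u, v, z] :: real^3^3) = c * det (vector [u, v, w] :: real^3^3)"
  using assms by (simp add: det_3 algebra_simps)

lemma coord_unique:
  fixes u v w :: "real^3"
  assumes "det (vector [u, v, w] :: real^3^3) = 1"
    and "a *\<^sub>R u + b *\<^sub>R v + c *\<^sub>R w = a' *\<^sub>R u + b' *\<^sub>R v + c' *\<^sub>R w"
  shows "a = a'" "b = b'" "c = c'"
proof -
  define z where "z = a *\<^sub>R u + b *\<^sub>R v + c *\<^sub>R w"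
  have z2: "z = a' *\<^sub>R u + b' *\<^sub>R v + c' *\<^sub>R w" using assms(2) z_def by simp
  show "a = a'" using det_coordA[OF z_def] det_coordA[OF z2] assms(1) by simp
  show "b = b'" using det_coordB[OF z_def] det_coordB[OF z2] assms(1) by simp
  show "c = c'" using det_coordC[OF z_def] det_coordC[OF z2] assms(1) by simp
qed



lemma hvd_comb:
  fixes fa fb fc :: "real \<Rightarrow> real" and u v w :: "real \<Rightarrow> 'a::real_normed_vector"
  assumes "(fa has_vector_derivative da) (at x)" "(fb has_vector_derivative db) (at x)"
    "(fc has_vector_derivative dc) (at x)"
    "(u has_vector_derivative du) (at x)" "(v has_vector_derivative dv) (at x)"
    "(w has_vector_derivative dw) (at x)"
  shows "((\<lambda>y. fa y *\<^sub>R u y + fb y *\<^sub>R v y + fc y *\<^sub>R w y) has_vector_derivative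
     (fa x *\<^sub>R du + da *\<^sub>R u x + (fb x *\<^sub>R dv + db *\<^sub>R v x) + (fc x *\<^sub>R dw + dc *\<^sub>R w x))) (at x)"
  using assms unfolding has_real_derivative_iff_has_vector_derivative[symmetric]
  by (intro has_vector_derivative_add has_vector_derivative_scaleR)

definition "fR0 = Ad (Ng (Bas 2 1)) (Mu (Cst (-1/3)) (Ad (Bas 3 2) (Mu (Cst 2) (Mu (Bas 1 0) (Bas 3 0)))))"
definition "sA a b c = Ad (dx a) (Mu (Bas 0 0) c)"
definition "sB a b c = Ad (Ad (dx b) a) (Mu (Bas 1 0) c)"
definition "sC a b c = Ad (dx c) b"

definition "A1 = fR0"
definition "B1 = Bas 2 0"
definition "C1 = Bas 3 0"
definition "A2 = sA A1 B1 C1"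
definition "B2 = sB A1 B1 C1"
definition "C2 = sC A1 B1 C1"
definition "A3 = sA A2 B2 C2"
definition "B3 = sB A2 B2 C2"
definition "C3 = sC A2 B2 C2"
definition "A4 = sA A3 B3 C3"
definition "B4 = sB A3 B3 C3"
definition "C4 = sC A3 B3 C3"
definition "P0t = Ad A4 (Ng (Ad (Mu (Bas 0 0) A1) (Mu (Bas 1 0) A2)))"
definition "P1t = Ad B4 (Ng (Ad (Mu (Bas 0 0) B1) (Mu (Bas 1 0) B2)))"

lemma funpow12: "(f ^^ 1) = f" "(f ^^ 2) x = f (f x)"
  by (simp_all add: numeral_2_eq_2)

locale S =
  fixes U :: "(real \<times> real) set"
    and \<gamma> :: "real \<Rightarrow> real \<Rightarrow> real^3"
    and p0 p1 r1 r2 :: "real \<Rightarrow> real \<Rightarrow> real"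
  assumes U_open: "open U"
    and smooth: "smooth2 U \<gamma>"
    and arclength: "\<And>x t. (x, t) \<in> U \<Longrightarrow>
          det (vector [\<gamma> x t, pDx \<gamma> x t, pDx (pDx \<gamma>) x t] :: real^3^3) = 1"
    and wilczynski: "\<And>x t. (x, t) \<in> U \<Longrightarrow>
          pDx (pDx (pDx \<gamma>)) x t = p0 x t *\<^sub>R \<gamma> x t + p1 x t *\<^sub>R pDx \<gamma> x t"
    and evolution: "\<And>x t. (x, t) \<in> U \<Longrightarrow>
          pDt \<gamma> x t =
            (- pDx r1 x t - (1/3) * (pDx (pDx r2) x t + 2 * p1 x t * r2 x t)) *\<^sub>R \<gamma> x t
            + r1 x t *\<^sub>R pDx \<gamma> x t + r2 x t *\<^sub>R pDx (pDx \<gamma>) x t"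
begin

definition rho :: "nat \<Rightarrow> real \<Rightarrow> real \<Rightarrow> real" where
  "rho i = (if i = 0 then p0 else if i = 1 then p1 else if i = 2 then r1 else r2)"

definition comb where
  "comb a b c = (\<lambda>x t. ev rho a x t *\<^sub>R \<gamma> x t + ev rho b x t *\<^sub>R pDx \<gamma> x t + ev rho c x t *\<^sub>R pDx (pDx \<gamma>) x t)"

lemma sm1: "smooth2 U (pDx \<gamma>)" "smooth2 U (pDx (pDx \<gamma>))" "smooth2 U (pDx (pDx (pDx \<gamma>)))"
  "smooth2 U (pDt \<gamma>)"
  using smooth smooth2_pDx smooth2_pDt by blast+

lemma sm_p1: "smooth2 U p1"
proof (rule smooth2_cong[OF U_open _ PP_smooth[OF U_open PP_det[OF U_open smooth sm1(3) sm1(2)]]])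
  show "eqU U (\<lambda>x t. det (vector [\<gamma> x t, pDx (pDx (pDx \<gamma>)) x t, pDx (pDx \<gamma>) x t])) p1"
    unfolding eqU_def
  proof (intro allI impI)
    fix x t assume xt: "(x, t) \<in> U"
    have "pDx (pDx (pDx \<gamma>)) x t = p0 x t *\<^sub>R \<gamma> x t + p1 x t *\<^sub>R pDx \<gamma> x t + 0 *\<^sub>R pDx (pDx \<gamma>) x t"
      using wilczynski[OF xt] by simp
    from det_coordB[OF this] arclength[OF xt]
    show "det (vector [\<gamma> x t, pDx (pDx (pDx \<gamma>)) x t, pDx (pDx \<gamma>) x t] :: real^3^3) = p1 x t" by simp
  qed
qed

lemma sm_p0: "smooth2 U p0"
proof (rule smooth2_cong[OF U_open _ PP_smooth[OF U_open PP_det[OF U_open sm1(3) sm1(1) sm1(2)]]])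
  show "eqU U (\<lambda>x t. det (vector [pDx (pDx (pDx \<gamma>)) x t, pDx \<gamma> x t, pDx (pDx \<gamma>) x t])) p0"
    unfolding eqU_def
  proof (intro allI impI)
    fix x t assume xt: "(x, t) \<in> U"
    have "pDx (pDx (pDx \<gamma>)) x t = p0 x t *\<^sub>R \<gamma> x t + p1 x t *\<^sub>R pDx \<gamma> x t + 0 *\<^sub>R pDx (pDx \<gamma>) x t"
      using wilczynski[OF xt] by simp
    from det_coordA[OF this] arclength[OF xt]
    show "det (vector [pDx (pDx (pDx \<gamma>)) x t, pDx \<gamma> x t, pDx (pDx \<gamma>) x t] :: real^3^3) = p0 x t" by simp
  qed
qed

lemma sm_r1: "smooth2 U r1"
proof (rule smooth2_cong[OF U_open _ PP_smooth[OF U_open PP_det[OF U_open smooth sm1(4) sm1(2)]]])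
  show "eqU U (\<lambda>x t. det (vector [\<gamma> x t, pDt \<gamma> x t, pDx (pDx \<gamma>) x t])) r1"
    unfolding eqU_def
  proof (intro allI impI)
    fix x t assume xt: "(x, t) \<in> U"
    from det_coordB[OF evolution[OF xt]] arclength[OF xt]
    show "det (vector [\<gamma> x t, pDt \<gamma> x t, pDx (pDx \<gamma>) x t] :: real^3^3) = r1 x t" by simp
  qed
qed

lemma sm_r2: "smooth2 U r2"
proof (rule smooth2_cong[OF U_open _ PP_smooth[OF U_open PP_det[OF U_open smooth sm1(1) sm1(4)]]])
  show "eqU U (\<lambda>x t. det (vector [\<gamma> x t, pDx \<gamma> x t, pDt \<gamma> x t])) r2"
    unfolding eqU_def
  proof (intro allI impI)
    fix x t assume xt: "(x, t) \<in> U"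
    from det_coordC[OF evolution[OF xt]] arclength[OF xt]
    show "det (vector [\<gamma> x t, pDx \<gamma> x t, pDt \<gamma> x t] :: real^3^3) = r2 x t" by simp
  qed
qed

lemma sm_rho: "smooth2 U (rho i)"
  unfolding rho_def using sm_p0 sm_p1 sm_r1 sm_r2 by simp

lemma hvd_ev: "(x, t) \<in> U \<Longrightarrow> ((\<lambda>y. ev rho e y t) has_vector_derivative ev rho (dx e) x t) (at x)"
  using ev_diff(1)[OF U_open sm_rho, where x=x and t=t and e=e] ev_dx[OF U_open sm_rho, where x=x and t=t and e=e]
  unfolding vector_derivative_works pDx_def by simp

lemma hvd_vec: "smooth2 U f \<Longrightarrow> (x, t) \<in> U \<Longrightarrow> ((\<lambda>y. f y t) has_vector_derivative pDx f x t) (at x)"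
  unfolding smooth2_def pDx_def using vector_derivative_works
  by (metis iter_partial.simps(1))

lemma step:
  assumes xt: "(x, t) \<in> U"
  shows "pDx (comb a b c) x t = comb (sA a b c) (sB a b c) (sC a b c) x t"
proof -
  have "((\<lambda>y. comb a b c y t) has_vector_derivative
     (ev rho a x t *\<^sub>R pDx \<gamma> x t + ev rho (dx a) x t *\<^sub>R \<gamma> x t
     + (ev rho b x t *\<^sub>R pDx (pDx \<gamma>) x t + ev rho (dx b) x t *\<^sub>R pDx \<gamma> x t)
     + (ev rho c x t *\<^sub>R pDx (pDx (pDx \<gamma>)) x t + ev rho (dx c) x t *\<^sub>R pDx (pDx \<gamma>) x t))) (at x)"
    unfolding comb_def
    by (intro hvd_comb hvd_ev hvd_vec xt smooth sm1)
  then have "pDx (comb a b c) x t = ev rho a x t *\<^sub>R pDx \<gamma> x t + ev rho (dx a) x t *\<^sub>R \<gamma> x t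
     + (ev rho b x t *\<^sub>R pDx (pDx \<gamma>) x t + ev rho (dx b) x t *\<^sub>R pDx \<gamma> x t)
     + (ev rho c x t *\<^sub>R pDx (pDx (pDx \<gamma>)) x t + ev rho (dx c) x t *\<^sub>R pDx (pDx \<gamma>) x t)"
    unfolding pDx_def[of "comb a b c"] by (rule vector_derivative_at)
  also have "\<dots> = comb (sA a b c) (sB a b c) (sC a b c) x t"
    unfolding comb_def sA_def sB_def sC_def wilczynski[OF xt]
    by (simp add: rho_def algebra_simps)
  finally show ?thesis .
qed


lemma hvdt: "smooth2 U f \<Longrightarrow> (x, t) \<in> U \<Longrightarrow> ((\<lambda>s. f x s) has_vector_derivative pDt f x t) (at t)"
  unfolding smooth2_def pDt_def using vector_derivative_works
  by (metis iter_partial.simps(1))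

lemma E1: "eqU U (pDt \<gamma>) (comb A1 B1 C1)"
  unfolding eqU_def
proof (intro allI impI)
  fix x t assume xt: "(x, t) \<in> U"
  show "pDt \<gamma> x t = comb A1 B1 C1 x t"
    unfolding evolution[OF xt] comb_def A1_def B1_def C1_def fR0_def
    by (simp add: rho_def funpow12)
qed

lemma E_next:
  assumes "smooth2 U g" "eqU U (pDt g) (comb a b c)"
  shows "eqU U (pDt (pDx g)) (comb (sA a b c) (sB a b c) (sC a b c))"
  unfolding eqU_def
proof (intro allI impI)
  fix x t assume xt: "(x, t) \<in> U"
  have "pDt (pDx g) x t = pDx (pDt g) x t" by (rule clairaut[OF U_open assms(1) xt])
  also have "\<dots> = pDx (comb a b c) x t" by (rule pDx_cong[OF U_open xt assms(2)])
  also have "\<dots> = comb (sA a b c) (sB a b c) (sC a b c) x t" by (rule step[OF xt])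
  finally show "pDt (pDx g) x t = comb (sA a b c) (sB a b c) (sC a b c) x t" .
qed

lemma E2: "eqU U (pDt (pDx \<gamma>)) (comb A2 B2 C2)"
  unfolding A2_def B2_def C2_def by (rule E_next[OF smooth E1])
lemma E3: "eqU U (pDt (pDx (pDx \<gamma>))) (comb A3 B3 C3)"
  unfolding A3_def B3_def C3_def by (rule E_next[OF sm1(1) E2])
lemma E4: "eqU U (pDt (pDx (pDx (pDx \<gamma>)))) (comb A4 B4 C4)"
  unfolding A4_def B4_def C4_def by (rule E_next[OF sm1(2) E3])

lemma E5:
  assumes xt: "(x, t) \<in> U"
  shows "pDt p0 x t = ev rho P0t x t" "pDt p1 x t = ev rho P1t x t"
proof -
  have w: "eqU U (pDx (pDx (pDx \<gamma>))) (\<lambda>x t. p0 x t *\<^sub>R \<gamma> x t + p1 x t *\<^sub>R pDx \<gamma> x t)"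
    using wilczynski by (simp add: eqU_def)
  have "((\<lambda>s. p0 x s *\<^sub>R \<gamma> x s + p1 x s *\<^sub>R pDx \<gamma> x s) has_vector_derivative
      (p0 x t *\<^sub>R pDt \<gamma> x t + pDt p0 x t *\<^sub>R \<gamma> x t + (p1 x t *\<^sub>R pDt (pDx \<gamma>) x t + pDt p1 x t *\<^sub>R pDx \<gamma> x t))) (at t)"
    using hvdt[OF sm_p0 xt] hvdt[OF sm_p1 xt] hvdt[OF smooth xt] hvdt[OF sm1(1) xt]
    unfolding has_real_derivative_iff_has_vector_derivative[symmetric]
    by (intro has_vector_derivative_add has_vector_derivative_scaleR)
  then have "pDt (\<lambda>x t. p0 x t *\<^sub>R \<gamma> x t + p1 x t *\<^sub>R pDx \<gamma> x t) x t =
      p0 x t *\<^sub>R pDt \<gamma> x t + pDt p0 x t *\<^sub>R \<gamma> x t + (p1 x t *\<^sub>R pDt (pDx \<gamma>) x t + pDt p1 x t *\<^sub>R pDx \<gamma> x t)"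
    unfolding pDt_def[of "\<lambda>x t. p0 x t *\<^sub>R \<gamma> x t + p1 x t *\<^sub>R pDx \<gamma> x t"] by (rule vector_derivative_at)
  moreover have "pDt (pDx (pDx (pDx \<gamma>))) x t = pDt (\<lambda>x t. p0 x t *\<^sub>R \<gamma> x t + p1 x t *\<^sub>R pDx \<gamma> x t) x t"
    by (rule pDt_cong[OF U_open xt w])
  moreover have "pDt (pDx (pDx (pDx \<gamma>))) x t = comb A4 B4 C4 x t"
    using E4 xt by (simp add: eqU_def)
  moreover have "pDt \<gamma> x t = comb A1 B1 C1 x t" using E1 xt by (simp add: eqU_def)
  moreover have "pDt (pDx \<gamma>) x t = comb A2 B2 C2 x t" using E2 xt by (simp add: eqU_def)
  ultimately have eq: "ev rho A4 x t *\<^sub>R \<gamma> x t + ev rho B4 x t *\<^sub>R pDx \<gamma> x t + ev rho C4 x t *\<^sub>R pDx (pDx \<gamma>) x t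
    = (pDt p0 x t + p0 x t * ev rho A1 x t + p1 x t * ev rho A2 x t) *\<^sub>R \<gamma> x t
      + (pDt p1 x t + p0 x t * ev rho B1 x t + p1 x t * ev rho B2 x t) *\<^sub>R pDx \<gamma> x t
      + (p0 x t * ev rho C1 x t + p1 x t * ev rho C2 x t) *\<^sub>R pDx (pDx \<gamma>) x t"
    unfolding comb_def by (simp add: algebra_simps)
  note cu = coord_unique[OF arclength[OF xt] eq]
  show "pDt p0 x t = ev rho P0t x t" using cu(1) unfolding P0t_def by (simp add: rho_def)
  show "pDt p1 x t = ev rho P1t x t" using cu(2) unfolding P1t_def by (simp add: rho_def)
qed


lemma final:
  fixes k1 k2 :: "real \<Rightarrow> real \<Rightarrow> real"
  assumes k1_def: "k1 = p1"
    and k2_def: "k2 = (\<lambda>x t. p0 x t - pDx p1 x t)"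
    and xt: "(x, t) \<in> U"
  shows "(pDt k1 x t =
           - 2 * (pDx ^^ 3) r1 x t
           + pDx (\<lambda>y s. k1 y s * r1 y s) x t + k1 x t * pDx r1 x t
           - (pDx ^^ 4) r2 x t
           + (pDx ^^ 2) (\<lambda>y s. k1 y s * r2 y s) x t
           + 2 * pDx (\<lambda>y s. k2 y s * r2 y s) x t + k2 x t * pDx r2 x t)
       \<and> (pDt k2 x t =
           (pDx ^^ 4) r1 x t - k1 x t * (pDx ^^ 2) r1 x t
           + 2 * k2 x t * pDx r1 x t + pDx (\<lambda>y s. k2 y s * r1 y s) x t
           + (2/3) * ((pDx ^^ 5) r2 x t
                      + k1 x t * pDx (\<lambda>y s. k1 y s * r2 y s) x t
                      - k1 x t * (pDx ^^ 3) r2 x t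
                      - (pDx ^^ 3) (\<lambda>y s. k1 y s * r2 y s) x t)
           + (k2 x t * (pDx ^^ 2) r2 x t - (pDx ^^ 2) (\<lambda>y s. k2 y s * r2 y s) x t))"
proof -
  define K2 where "K2 = Ad (Bas 0 0) (Ng (Bas 1 1))"
  have ep: "\<And>e. pDx (ev rho e) x t = ev rho (dx e) x t"
    by (rule ev_dx[OF U_open sm_rho xt])
  have epn: "\<And>n e. (pDx ^^ n) (ev rho e) x t = ev rho ((dx ^^ n) e) x t"
    using ev_dxn[OF U_open sm_rho] xt by (simp add: eqU_def)
  have f1: "(\<lambda>y s. k1 y s * r1 y s) = ev rho (Mu (Bas 1 0) (Bas 2 0))"
    unfolding k1_def by (simp add: rho_def)
  have f2: "(\<lambda>y s. k1 y s * r2 y s) = ev rho (Mu (Bas 1 0) (Bas 3 0))"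
    unfolding k1_def by (simp add: rho_def)
  have f3: "(\<lambda>y s. k2 y s * r2 y s) = ev rho (Mu K2 (Bas 3 0))"
    unfolding k2_def K2_def by (simp add: rho_def)
  have f4: "(\<lambda>y s. k2 y s * r1 y s) = ev rho (Mu K2 (Bas 2 0))"
    unfolding k2_def K2_def by (simp add: rho_def)
  have lhs1: "pDt k1 x t = ev rho P1t x t" unfolding k1_def by (rule E5(2)[OF xt])
  have "pDt k2 x t = pDt p0 x t - pDt (pDx p1) x t"
  proof -
    have "((\<lambda>s. p0 x s - pDx p1 x s) has_vector_derivative pDt p0 x t - pDt (pDx p1) x t) (at t)"
      by (intro has_vector_derivative_diff hvdt[OF sm_p0 xt] hvdt[OF smooth2_pDx[OF sm_p1] xt])
    then show ?thesis unfolding k2_def pDt_def[of "\<lambda>x t. p0 x t - pDx p1 x t"]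
      by (rule vector_derivative_at)
  qed
  also have "pDt (pDx p1) x t = pDx (pDt p1) x t" by (rule clairaut[OF U_open sm_p1 xt])
  also have "\<dots> = pDx (ev rho P1t) x t"
    by (rule pDx_cong[OF U_open xt]) (use E5(2) in \<open>simp add: eqU_def\<close>)
  also have "\<dots> = ev rho (dx P1t) x t" by (rule ep)
  finally have lhs2: "pDt k2 x t = ev rho P0t x t - ev rho (dx P1t) x t" using E5(1)[OF xt] by simp
  show ?thesis
    unfolding lhs1 lhs2 f1 f2 f3 f4 ep epn
    unfolding k1_def k2_def
    apply (simp add: P0t_def P1t_def A1_def B1_def C1_def A2_def B2_def C2_def A3_def B3_def C3_def
       A4_def B4_def C4_def sA_def sB_def sC_def fR0_def K2_def rho_def funpow12 numeral_3_eq_3 eval_nat_numeral)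
    by (simp add: field_simps)
qed

end
theorem mainTheorem1:
  fixes U :: "(real \<times> real) set"
    and \<gamma> :: "real \<Rightarrow> real \<Rightarrow> real^3"
    and p0 p1 r1 r2 k1 k2 :: "real \<Rightarrow> real \<Rightarrow> real"
  assumes U_open: "open U"
    and smooth: "smooth2 U \<gamma>"
    and arclength: "\<And>x t. (x, t) \<in> U \<Longrightarrow>
          det (vector [\<gamma> x t, pDx \<gamma> x t, pDx (pDx \<gamma>) x t] :: real^3^3) = 1"
    and wilczynski: "\<And>x t. (x, t) \<in> U \<Longrightarrow>
          pDx (pDx (pDx \<gamma>)) x t = p0 x t *\<^sub>R \<gamma> x t + p1 x t *\<^sub>R pDx \<gamma> x t"
    and evolution: "\<And>x t. (x, t) \<in> U \<Longrightarrow>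
          pDt \<gamma> x t =
            (- pDx r1 x t - (1/3) * (pDx (pDx r2) x t + 2 * p1 x t * r2 x t)) *\<^sub>R \<gamma> x t
            + r1 x t *\<^sub>R pDx \<gamma> x t + r2 x t *\<^sub>R pDx (pDx \<gamma>) x t"
    and k1_def: "k1 = p1"
    and k2_def: "k2 = (\<lambda>x t. p0 x t - pDx p1 x t)"
    and xt: "(x, t) \<in> U"
  shows "(pDt k1 x t =
           - 2 * (pDx ^^ 3) r1 x t
           + pDx (\<lambda>y s. k1 y s * r1 y s) x t + k1 x t * pDx r1 x t
           - (pDx ^^ 4) r2 x t
           + (pDx ^^ 2) (\<lambda>y s. k1 y s * r2 y s) x t
           + 2 * pDx (\<lambda>y s. k2 y s * r2 y s) x t + k2 x t * pDx r2 x t)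
       \<and> (pDt k2 x t =
           (pDx ^^ 4) r1 x t - k1 x t * (pDx ^^ 2) r1 x t
           + 2 * k2 x t * pDx r1 x t + pDx (\<lambda>y s. k2 y s * r1 y s) x t
           + (2/3) * ((pDx ^^ 5) r2 x t
                      + k1 x t * pDx (\<lambda>y s. k1 y s * r2 y s) x t
                      - k1 x t * (pDx ^^ 3) r2 x t
                      - (pDx ^^ 3) (\<lambda>y s. k1 y s * r2 y s) x t)
           + (k2 x t * (pDx ^^ 2) r2 x t - (pDx ^^ 2) (\<lambda>y s. k2 y s * r2 y s) x t))"
  proof -
  have SS: "S U \<gamma> p0 p1 r1 r2"
  proof (unfold_locales)
    show "open U" by (rule U_open)
    show "smooth2 U \<gamma>" by (rule smooth)
  qed (simp_all add: arclength wilczynski evolution)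
  show ?thesis by (rule S.final[OF SS k1_def k2_def xt])
qed

end
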